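(* Let $\mathcal{I}=([n],M,\mathcal{V})$ be an instance with additive valuations, $\epsilon\ge0$, and $(N',M',\mathcal{V})=\mathtt{reduce}(\mathcal{I},\epsilon)$. Let $r_4$ be the number of times $R^{3/4+\epsilon}_4$ is applied during $\mathtt{reduce}(\mathcal{I},\epsilon)$ and $G_4$ the set of goods removed by these applications. Then for every agent $i\in N'$, $\mathrm{MMS}^{n-r_4}_{v_i}(M\setminus G_4)\ge1-4\epsilon$, where $v_i$ denotes the valuation obtained after steps (1)–(2) of $\mathtt{reduce}$ and $M$ the full set of goods.
   Context: $\mathrm{MMS}^d_v(S)$ is the maximum over partitions of $S$ into $d$ bundles of the minimum bundle value under $v$; $\mathrm{MMS}_i=\mathrm{MMS}^n_{v_i}(M)$. An instance is ordered if $M=[m]$ and $v_i(1)\ge\dots\ge v_i(m)$ for all agents $i$. $\mathtt{order}(([n],[m],\mathcal{V}))$ replaces $v_i$ by $v'_i$ where $v'_i(j)$ is the $j$-th largest number of the multiset $\{v_i(g):g\in[m]\}$. Rules for an ordered instance with $n$ current agents and threshold $\alpha$: $R^\alpha_1$ applicable if some agent $i$ has $v_i(1)\ge\alpha$; $R^\alpha_2$ if some $i$ has $v_i(\{2n-1,2n,2n+1\})\ge\alpha$; $R^\alpha_3$ if some $i$ has $v_i(\{3n-2,\dots,3n+1\})\ge\alpha$; $R^\alpha_4$ if some $i$ has $v_i(\{1,2n+1\})\ge\alpha$; applying it gives that set to such an agent and removes agent and goods, re-indexing the remaining goods in their order. $\mathtt{reduce}(\mathcal{I},\epsilon)$: (1)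 replace $\mathcal{I}$ by $\mathtt{order}(\mathcal{I})$; (2) set $v_i(g)\leftarrow v_i(g)/\mathrm{MMS}_i$ for all agents $i$ and goods $g$ (so every $\mathrm{MMS}_i$ becomes 1); (3) while some $R^{3/4+\epsilon}_k$, $k\in[4]$, is applicable, apply it for the smallest applicable $k$; output the remaining agents, goods and valuations. *)

theory Defs
  imports Complex_Main "HOL-Library.Multiset" "HOL-Library.FuncSet"
begin

text \<open>Partitions of S into d (possibly empty) bundles are encoded as assignments
  A \<in> S \<rightarrow>E {..<d}; bundle k is {g \<in> S. A g = k}.\<close>

definition MMS :: "nat \<Rightarrow> ('g \<Rightarrow> real) \<Rightarrow> 'g set \<Rightarrow> real" where
  "MMS d f S = Max ((\<lambda>A. Min ((\<lambda>k. \<Sum>g\<in>{g\<in>S. A g = k}. f g) ` {..<d})) ` (S \<rightarrow>\<^sub>E {..<d}))"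

text \<open>order: goods become 1..m and v'_i(j) is the j-th largest element of the multiset
  {v_i(g) : g in M}.\<close>
definition order_val :: "'g set \<Rightarrow> (nat \<Rightarrow> 'g \<Rightarrow> real) \<Rightarrow> nat \<Rightarrow> nat \<Rightarrow> real" where
  "order_val M v i j =
     (if 1 \<le> j \<and> j \<le> card M
      then rev (sorted_list_of_multiset (image_mset (v i) (mset_set M))) ! (j - 1)
      else 0)"

definition normalize_val :: "nat \<Rightarrow> nat \<Rightarrow> (nat \<Rightarrow> nat \<Rightarrow> real) \<Rightarrow> nat \<Rightarrow> nat \<Rightarrow> real" where
  "normalize_val n m w i g = w i g / MMS n (w i) {1..m}"

text \<open>Goods at the (1-based) positions P of the current ordered list of remaining goods L
  (positions beyond the list are ignored, i.e. treated as absent goods).\<close>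
definition goods_at :: "nat list \<Rightarrow> nat set \<Rightarrow> nat set" where
  "goods_at L P = {L ! (p - 1) | p. p \<in> P \<and> 1 \<le> p \<and> p \<le> length L}"

definition rule_pos :: "nat \<Rightarrow> nat \<Rightarrow> nat set" where
  "rule_pos k n =
     (if k = 1 then {1}
      else if k = 2 then {2*n - 1, 2*n, 2*n + 1}
      else if k = 3 then {3*n - 2 .. 3*n + 1}
      else {1, 2*n + 1})"

definition rule_applicable ::
  "(nat \<Rightarrow> nat \<Rightarrow> real) \<Rightarrow> real \<Rightarrow> nat set \<Rightarrow> nat list \<Rightarrow> nat \<Rightarrow> nat \<Rightarrow> bool" where
  "rule_applicable w \<alpha> N L k i \<longleftrightarrow>
     k \<in> {1..4} \<and> i \<in> N \<and> (\<Sum>g\<in>goods_at L (rule_pos k (card N)). w i g) \<ge> \<alpha>"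

text \<open>A run of the while-loop of reduce, starting with agents N and remaining goods L
  (ordered list), ending with agents N' and goods L'. The trace records for each
  application (k, agent, removed goods). Any agent for which the smallest applicable
  rule applies may be chosen.\<close>
inductive reduce_run ::
  "(nat \<Rightarrow> nat \<Rightarrow> real) \<Rightarrow> real \<Rightarrow> nat set \<Rightarrow> nat list \<Rightarrow> (nat \<times> nat \<times> nat set) list
   \<Rightarrow> nat set \<Rightarrow> nat list \<Rightarrow> bool" where
  stop: "\<not> (\<exists>k i. rule_applicable w \<alpha> N L k i) \<Longrightarrow> reduce_run w \<alpha> N L [] N L"
| step: "rule_applicable w \<alpha> N L k i \<Longrightarrow>
         (\<forall>k' i'. k' < k \<longrightarrow> \<not> rule_applicable w \<alpha> N L k' i') \<Longrightarrow>
         S = goods_at L (rule_pos k (card N)) \<Longrightarrow>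
         reduce_run w \<alpha> (N - {i}) (filter (\<lambda>g. g \<notin> S) L) tr N' L' \<Longrightarrow>
         reduce_run w \<alpha> N L ((k, i, S) # tr) N' L'"

end

theory Submission
  imports Defs "HOL-Combinatorics.List_Permutation"
begin


definition sw :: "nat \<Rightarrow> nat" where
  "sw u = (if u = 4 then 2 else if u = 1 \<or> u = 3 then 1 else 0)"

lemma cnt_sums:
  fixes u :: "'a \<Rightarrow> nat"
  assumes "finite K" "\<forall>k\<in>K. u k \<le> 4"
  shows "(\<Sum>k\<in>K. u k) = card {k\<in>K. u k = 1} + 2*card {k\<in>K. u k = 2} + 3*card {k\<in>K. u k = 3} + 4*card {k\<in>K. u k = 4}
     \<and> (\<Sum>k\<in>K. sw (u k)) = card {k\<in>K. u k = 1} + card {k\<in>K. u k = 3} + 2*card {k\<in>K. u k = 4}"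
  using assms
proof (induction K rule: finite_induct)
  case empty
  then show ?case by simp
next
  case (insert x F)
  have e: "\<And>j. {k\<in>insert x F. u k = j} = (if u x = j then insert x {k\<in>F. u k = j} else {k\<in>F. u k = j})"
    by auto
  have c: "\<And>j. card {k\<in>insert x F. u k = j} = (if u x = j then Suc (card {k\<in>F. u k = j}) else card {k\<in>F. u k = j})"
    using insert(1,2) unfolding e by (simp add: card_insert_if)
  have "u x \<le> 4" using insert by auto
  then have "u x = 0 \<or> u x = 1 \<or> u x = 2 \<or> u x = 3 \<or> u x = 4" by auto
  then show ?case using insert c by (auto simp: sw_def)
qed
lemma arith_step:
  fixes c1 c2 c3 c4 q :: nat
  assumes "1 \<le> q" "4*(q+1) \<le> c1 + 2*c2 + 3*c3 + 4*c4" "2*(q+1) \<le> c1 + c3 + 2*c4"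
  shows "\<exists>d1 d2 d3 d4. d1 \<le> c1 \<and> d2 \<le> c2 \<and> d3 \<le> c3 \<and> d4 \<le> c4 \<and>
     4 \<le> d1 + 2*d2 + 3*d3 + 4*d4 \<and>
     4*q \<le> (c1-d1) + 2*(c2-d2) + 3*(c3-d3) + 4*(c4-d4) \<and>
     2*q \<le> (c1-d1) + (c3-d3) + 2*(c4-d4)"
proof -
  have "c4 \<ge> 1 \<or> (c4 = 0 \<and> c3 \<ge> 1 \<and> c1 \<ge> 1) \<or> (c4 = 0 \<and> c3 \<ge> 2 \<and> c1 = 0)
    \<or> (c4 = 0 \<and> c3 = 0 \<and> c2 \<ge> 2) \<or> (c4 = 0 \<and> c3 = 0 \<and> c2 = 1 \<and> c1 \<ge> 2)
    \<or> (c4 = 0 \<and> c3 = 0 \<and> c2 = 0)"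
    using assms by presburger
  then consider "c4 \<ge> 1" | "c4 = 0" "c3 \<ge> 1" "c1 \<ge> 1" | "c4 = 0" "c3 \<ge> 2" "c1 = 0"
    | "c4 = 0" "c3 = 0" "c2 \<ge> 2" | "c4 = 0" "c3 = 0" "c2 = 1" "c1 \<ge> 2"
    | "c4 = 0" "c3 = 0" "c2 = 0" by blast
  then show ?thesis
  proof cases
    case 1 then show ?thesis using assms by (intro exI[of _ 0] exI[of _ 1]) auto
  next
    case 2 then show ?thesis using assms by (intro exI[of _ 1] exI[of _ 0]) auto
  next
    case 3 then show ?thesis using assms by (intro exI[of _ 0] exI[of _ 2]) auto
  next
    case 4 then show ?thesis using assms by (intro exI[of _ 0] exI[of _ 2]) auto
  next
    case 5 then show ?thesis using assms by (intro exI[of _ 2] exI[of _ 1] exI[of _ 0]) auto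
  next
    case 6 then show ?thesis using assms by (intro exI[of _ 4] exI[of _ 0]) auto
  qed
qed

lemma bin_ok:
  fixes K0 :: "'a set" and u :: "'a \<Rightarrow> nat" and \<rho> :: "'a \<Rightarrow> real"
  assumes "finite K0" "\<forall>k\<in>K0. \<rho> k \<ge> 0" "\<forall>k\<in>K0. \<rho> k \<ge> real (u k) * T / 4"
    and "4 \<le> (\<Sum>k\<in>K0. u k)"
  shows "T \<le> (\<Sum>k\<in>K0. \<rho> k)"
proof (cases "T \<ge> 0")
  case True
  have "(\<Sum>k\<in>K0. real (u k) * T / 4) \<le> (\<Sum>k\<in>K0. \<rho> k)"
    using assms(3) by (intro sum_mono) auto
  moreover have "(\<Sum>k\<in>K0. real (u k) * T / 4) = real (\<Sum>k\<in>K0. u k) * T / 4"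
    by (simp add: sum_divide_distrib sum_distrib_right)
  moreover have "real (\<Sum>k\<in>K0. u k) * T / 4 \<ge> 4 * T / 4"
  proof -
    have "real 4 \<le> real (\<Sum>k\<in>K0. u k)" using assms(4) by (rule of_nat_mono)
    then have "4 * T \<le> real (\<Sum>k\<in>K0. u k) * T" using True by (intro mult_right_mono) auto
    then show ?thesis by (intro divide_right_mono) auto
  qed
  ultimately show ?thesis by linarith
next
  case False
  have "0 \<le> (\<Sum>k\<in>K0. \<rho> k)" using assms(2) by (intro sum_nonneg) auto
  then show ?thesis using False by linarith
qed

lemma BC:
  fixes u :: "'a \<Rightarrow> nat" and \<rho> :: "'a \<Rightarrow> real"
  shows "1 \<le> q \<Longrightarrow> finite K \<Longrightarrow> \<forall>k\<in>K. u k \<le> 4 \<Longrightarrow> \<forall>k\<in>K. \<rho> k \<ge> 0 \<Longrightarrow>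
    \<forall>k\<in>K. \<rho> k \<ge> real (u k) * T / 4 \<Longrightarrow>
    4*q \<le> (\<Sum>k\<in>K. u k) \<Longrightarrow> 2*q \<le> (\<Sum>k\<in>K. sw (u k)) \<Longrightarrow>
    \<exists>\<phi>. (\<forall>k\<in>K. \<phi> k < q) \<and> (\<forall>j<q. T \<le> (\<Sum>k\<in>{k\<in>K. \<phi> k = j}. \<rho> k))"
proof (induction q arbitrary: K)
  case 0
  then show ?case by simp
next
  case (Suc q)
  note hyps = Suc.prems
  show ?case
  proof (cases "q = 0")
    case True
    have "T \<le> (\<Sum>k\<in>K. \<rho> k)"
      using hyps True by (intro bin_ok[of K \<rho> u T]) auto
    then show ?thesis using True by (intro exI[of _ "\<lambda>_. 0"]) auto
  next
    case False
    define c where "c = (\<lambda>j. card {k\<in>K. u k = j})"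
    have S: "(\<Sum>k\<in>K. u k) = c 1 + 2*c 2 + 3*c 3 + 4*c 4"
       "(\<Sum>k\<in>K. sw (u k)) = c 1 + c 3 + 2*c 4"
      using cnt_sums[of K u] hyps unfolding c_def by auto
    obtain d1 d2 d3 d4 where d: "d1 \<le> c 1" "d2 \<le> c 2" "d3 \<le> c 3" "d4 \<le> c 4"
       "4 \<le> d1 + 2*d2 + 3*d3 + 4*d4"
       "4*q \<le> (c 1-d1) + 2*(c 2-d2) + 3*(c 3-d3) + 4*(c 4-d4)"
       "2*q \<le> (c 1-d1) + (c 3-d3) + 2*(c 4-d4)"
      using arith_step[of q "c 1" "c 2" "c 3" "c 4"] False hyps(6,7) unfolding S by (metis One_nat_def Suc_eq_plus1 less_one not_le)
    obtain B1 where B1: "B1 \<subseteq> {k\<in>K. u k = 1}" "card B1 = d1" "finite B1"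
      using obtain_subset_with_card_n[of d1 "{k\<in>K. u k = 1}"] d(1) unfolding c_def by blast
    obtain B2 where B2: "B2 \<subseteq> {k\<in>K. u k = 2}" "card B2 = d2" "finite B2"
      using obtain_subset_with_card_n[of d2 "{k\<in>K. u k = 2}"] d(2) unfolding c_def by blast
    obtain B3 where B3: "B3 \<subseteq> {k\<in>K. u k = 3}" "card B3 = d3" "finite B3"
      using obtain_subset_with_card_n[of d3 "{k\<in>K. u k = 3}"] d(3) unfolding c_def by blast
    obtain B4 where B4: "B4 \<subseteq> {k\<in>K. u k = 4}" "card B4 = d4" "finite B4"
      using obtain_subset_with_card_n[of d4 "{k\<in>K. u k = 4}"] d(4) unfolding c_def by blast
    define K0 where "K0 = B1 \<union> B2 \<union> B3 \<union> B4"
    define K' where "K' = K - K0"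
    have K0K: "K0 \<subseteq> K" using B1 B2 B3 B4 unfolding K0_def by auto
    have fin0: "finite K0" using K0K hyps(2) finite_subset by blast
    have e1: "{k\<in>K'. u k = 1} = {k\<in>K. u k = 1} - B1" using B1 B2 B3 B4 unfolding K'_def K0_def by auto
    have e2: "{k\<in>K'. u k = 2} = {k\<in>K. u k = 2} - B2" using B1 B2 B3 B4 unfolding K'_def K0_def by auto
    have e3: "{k\<in>K'. u k = 3} = {k\<in>K. u k = 3} - B3" using B1 B2 B3 B4 unfolding K'_def K0_def by auto
    have e4: "{k\<in>K'. u k = 4} = {k\<in>K. u k = 4} - B4" using B1 B2 B3 B4 unfolding K'_def K0_def by auto
    have f0: "\<And>j. finite {k\<in>K. u k = j}" using hyps(2) by auto
    have c': "card {k\<in>K'. u k = 1} = c 1 - d1" "card {k\<in>K'. u k = 2} = c 2 - d2"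
       "card {k\<in>K'. u k = 3} = c 3 - d3" "card {k\<in>K'. u k = 4} = c 4 - d4"
      unfolding e1 e2 e3 e4 c_def using B1 B2 B3 B4 f0 by (simp_all add: card_Diff_subset)
    have finK': "finite K'" using hyps(2) unfolding K'_def by auto
    have S': "(\<Sum>k\<in>K'. u k) = (c 1 - d1) + 2*(c 2 - d2) + 3*(c 3 - d3) + 4*(c 4 - d4)"
       "(\<Sum>k\<in>K'. sw (u k)) = (c 1 - d1) + (c 3 - d3) + 2*(c 4 - d4)"
      using cnt_sums[of K' u] hyps finK' c' unfolding K'_def by auto
    have g1: "{k\<in>K0. u k = 1} = B1" using B1 B2 B3 B4 unfolding K0_def by auto
    have g2: "{k\<in>K0. u k = 2} = B2" using B1 B2 B3 B4 unfolding K0_def by auto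
    have g3: "{k\<in>K0. u k = 3} = B3" using B1 B2 B3 B4 unfolding K0_def by auto
    have g4: "{k\<in>K0. u k = 4} = B4" using B1 B2 B3 B4 unfolding K0_def by auto
    have S0: "(\<Sum>k\<in>K0. u k) = d1 + 2*d2 + 3*d3 + 4*d4"
      using cnt_sums[of K0 u] hyps fin0 K0K g1 g2 g3 g4 B1 B2 B3 B4 by auto
    have T0: "T \<le> (\<Sum>k\<in>K0. \<rho> k)"
      using hyps K0K S0 d(5) by (intro bin_ok[OF fin0, of \<rho> u T]) auto
    obtain \<phi> where \<phi>: "\<forall>k\<in>K'. \<phi> k < q" "\<forall>j<q. T \<le> (\<Sum>k\<in>{k\<in>K'. \<phi> k = j}. \<rho> k)"
    proof -
      have "1 \<le> q" using False by simp
      moreover have "\<forall>k\<in>K'. u k \<le> 4" "\<forall>k\<in>K'. \<rho> k \<ge> 0" "\<forall>k\<in>K'. \<rho> k \<ge> real (u k) * T / 4"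
        using hyps(3,4,5) unfolding K'_def by auto
      moreover have "4*q \<le> (\<Sum>k\<in>K'. u k)" "2*q \<le> (\<Sum>k\<in>K'. sw (u k))"
        unfolding S' using d(6,7) by auto
      ultimately show ?thesis using Suc.IH[OF _ finK'] that by blast
    qed
    define \<psi> where "\<psi> = (\<lambda>k. if k \<in> K0 then q else \<phi> k)"
    have A: "\<forall>k\<in>K. \<psi> k < Suc q" using \<phi>(1) unfolding \<psi>_def K'_def by (auto intro: less_SucI)
    have B: "T \<le> (\<Sum>k\<in>{k\<in>K. \<psi> k = j}. \<rho> k)" if "j < Suc q" for j
    proof (cases "j = q")
      case True
      have "{k\<in>K. \<psi> k = j} = K0" using \<phi>(1) K0K True unfolding \<psi>_def K'_def by (auto; metis DiffI less_irrefl)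
      then show ?thesis using T0 by simp
    next
      case False
      then have "j < q" using that by auto
      have "{k\<in>K. \<psi> k = j} = {k\<in>K'. \<phi> k = j}" using False unfolding \<psi>_def K'_def by auto
      then show ?thesis using \<phi>(2) \<open>j < q\<close> by simp
    qed
    show ?thesis using A B by blast
  qed
qed



lemma MMS_ge:
  assumes "finite S" "A \<in> S \<rightarrow>\<^sub>E {..<d}" "1 \<le> d"
    and "\<forall>j<d. t \<le> (\<Sum>g\<in>{g\<in>S. A g = j}. f g)"
  shows "t \<le> MMS d f S"
proof -
  let ?F = "\<lambda>A. Min ((\<lambda>k. \<Sum>g\<in>{g\<in>S. A g = k}. f g) ` {..<d})"
  have "t \<le> ?F A"
    using assms(3,4) by (subst Min_ge_iff) (auto simp: lessThan_empty_iff)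
  also have "?F A \<le> Max (?F ` (S \<rightarrow>\<^sub>E {..<d}))"
    using assms(1,2) by (intro Max_ge) (auto intro: finite_PiE)
  finally show ?thesis unfolding MMS_def .
qed

lemma MMS_attained:
  assumes "finite S" "1 \<le> d"
  shows "\<exists>A\<in>S \<rightarrow>\<^sub>E {..<d}. \<forall>j<d. MMS d f S \<le> (\<Sum>g\<in>{g\<in>S. A g = j}. f g)"
proof -
  let ?F = "\<lambda>A. Min ((\<lambda>k. \<Sum>g\<in>{g\<in>S. A g = k}. f g) ` {..<d})"
  have ne: "S \<rightarrow>\<^sub>E {..<d} \<noteq> {}"
    using assms(2) by (auto simp: PiE_eq_empty_iff lessThan_empty_iff)
  have fin: "finite (S \<rightarrow>\<^sub>E {..<d})" using assms(1) by (auto intro: finite_PiE)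
  have "MMS d f S \<in> ?F ` (S \<rightarrow>\<^sub>E {..<d})"
    unfolding MMS_def using ne fin by (intro Max_in) auto
  then obtain A where A: "A \<in> S \<rightarrow>\<^sub>E {..<d}" "MMS d f S = ?F A" by auto
  have "\<forall>j<d. ?F A \<le> (\<Sum>g\<in>{g\<in>S. A g = j}. f g)"
    by (intro allI impI Min_le) auto
  then show ?thesis using A by (intro bexI[of _ A]) auto
qed



lemma uk_bound:
  fixes a b :: nat and \<epsilon> \<rho> :: real
  assumes "\<epsilon> \<ge> 0" "\<rho> \<ge> 0" "\<rho> \<ge> 1 - real a * (3/4 + \<epsilon>) - real b * ((3/4 + \<epsilon>)/3)"
  shows "\<rho> \<ge> real (4 - (3*a + b)) * (1 - 4*\<epsilon>) / 4"
proof (cases "3*a + b \<le> 3")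
  case True
  then have "(a = 0 \<and> (b = 0 \<or> b = 1 \<or> b = 2 \<or> b = 3)) \<or> (a = 1 \<and> b = 0)" by auto
  then show ?thesis using assms by (elim disjE conjE) (simp_all add: field_simps)
next
  case False
  then have "4 - (3*a + b) = 0 \<or> 4 - (3*a+b) = 0" by auto
  then show ?thesis using assms False by auto
qed

lemma sw_bound:
  fixes a b :: nat
  shows "sw (4 - (3*a + b)) + a + b \<ge> 2"
  unfolding sw_def by presburger

lemma card_partition_sum:
  fixes A0 :: "'a \<Rightarrow> nat" and n :: nat
  assumes "finite X" "\<forall>x\<in>X. A0 x < n"
  shows "(\<Sum>k<n. card ({x\<in>X. A0 x = k} \<inter> G)) = card (X \<inter> G)"
proof -
  have "(\<Sum>k<n. card ({x\<in>X. A0 x = k} \<inter> G)) = card (\<Union>k<n. {x\<in>X. A0 x = k} \<inter> G)"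
    using assms(1) by (intro card_UN_disjoint[symmetric]) auto
  also have "(\<Union>k<n. {x\<in>X. A0 x = k} \<inter> G) = X \<inter> G" using assms(2) by auto
  finally show ?thesis .
qed

lemma comb:
  fixes w :: "nat \<Rightarrow> real" and X G H R :: "nat set" and A0 :: "nat \<Rightarrow> nat"
  assumes X: "finite X" and A0: "\<forall>x\<in>X. A0 x < n"
    and P1: "\<forall>k<n. (\<Sum>x\<in>{x\<in>X. A0 x = k}. w x) \<ge> 1"
    and w0: "\<forall>x\<in>X. w x \<ge> 0"
    and G: "finite G" "card G \<le> r" "\<forall>g\<in>G. w g \<le> 3/4 + \<epsilon>"
    and H: "finite H" "card H \<le> r" "\<forall>h\<in>H. 3 * w h \<le> 3/4 + \<epsilon>"
    and eps: "\<epsilon> \<ge> 0" and R: "R \<subseteq> G \<union> H" and rn: "r < n"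
  shows "MMS (n - r) w (X - R) \<ge> 1 - 4*\<epsilon>"
proof -
  define P where "P = (\<lambda>k. {x\<in>X. A0 x = k})"
  define a where "a = (\<lambda>k. card (P k \<inter> G))"
  define b where "b = (\<lambda>k. card (P k \<inter> H))"
  define u where "u = (\<lambda>k. 4 - (3 * a k + b k))"
  define \<rho> where "\<rho> = (\<lambda>k. \<Sum>x\<in>P k - R. w x)"
  define q where "q = n - r"
  define T where "T = 1 - 4*\<epsilon>"
  have finP: "\<And>k. finite (P k)" unfolding P_def using X by auto
  have u4: "\<forall>k\<in>{..<n}. u k \<le> 4" unfolding u_def by auto
  have r0: "\<forall>k\<in>{..<n}. \<rho> k \<ge> 0" unfolding \<rho>_def P_def using w0 by (auto intro: sum_nonneg)
  have rT: "\<forall>k\<in>{..<n}. \<rho> k \<ge> real (u k) * T / 4"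
  proof
    fix k assume k: "k \<in> {..<n}"
    have s1: "(\<Sum>x\<in>P k. w x) \<ge> 1" using P1 k unfolding P_def by auto
    have s2: "(\<Sum>x\<in>P k. w x) = (\<Sum>x\<in>P k \<inter> R. w x) + \<rho> k"
      unfolding \<rho>_def using finP by (rule sum.Int_Diff)
    have s3: "(\<Sum>x\<in>P k \<inter> R. w x) \<le> (\<Sum>x\<in>(P k \<inter> G) \<union> (P k \<inter> H). w x)"
      using R w0 finP unfolding P_def by (intro sum_mono2) auto
    have s4: "(\<Sum>x\<in>(P k \<inter> G) \<union> (P k \<inter> H). w x) \<le> (\<Sum>x\<in>P k \<inter> G. w x) + (\<Sum>x\<in>P k \<inter> H. w x)"
    proof -
      have "(\<Sum>x\<in>(P k \<inter> G) \<union> (P k \<inter> H). w x) + (\<Sum>x\<in>(P k \<inter> G) \<inter> (P k \<inter> H). w x)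
         = (\<Sum>x\<in>P k \<inter> G. w x) + (\<Sum>x\<in>P k \<inter> H. w x)"
        using finP by (intro sum.union_inter) auto
      moreover have "(\<Sum>x\<in>(P k \<inter> G) \<inter> (P k \<inter> H). w x) \<ge> 0"
        using w0 unfolding P_def by (intro sum_nonneg) auto
      ultimately show ?thesis by linarith
    qed
    have s5: "(\<Sum>x\<in>P k \<inter> G. w x) \<le> real (a k) * (3/4 + \<epsilon>)"
      unfolding a_def using G(3) by (intro sum_bounded_above) auto
    have s6: "(\<Sum>x\<in>P k \<inter> H. w x) \<le> real (b k) * ((3/4 + \<epsilon>)/3)"
      unfolding b_def using H(3) by (intro sum_bounded_above) auto
    have "\<rho> k \<ge> 1 - real (a k) * (3/4 + \<epsilon>) - real (b k) * ((3/4 + \<epsilon>)/3)"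
      using s1 s2 s3 s4 s5 s6 by linarith
    then show "\<rho> k \<ge> real (u k) * T / 4"
      unfolding u_def T_def using uk_bound[OF eps] r0 k by auto
  qed
  have suma: "(\<Sum>k<n. a k) \<le> r"
    using card_partition_sum[OF X A0, of G] card_mono[OF G(1), of "X \<inter> G"] G(2)
    unfolding a_def P_def by auto
  have sumb: "(\<Sum>k<n. b k) \<le> r"
    using card_partition_sum[OF X A0, of H] card_mono[OF H(1), of "X \<inter> H"] H(2)
    unfolding b_def P_def by auto
  have S1: "4*q \<le> (\<Sum>k\<in>{..<n}. u k)"
  proof -
    have "(\<Sum>k<n. 4::nat) \<le> (\<Sum>k<n. u k + 3 * a k + b k)"
      unfolding u_def by (intro sum_mono) auto
    also have "\<dots> = (\<Sum>k<n. u k) + 3 * (\<Sum>k<n. a k) + (\<Sum>k<n. b k)"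
      by (simp add: sum.distrib sum_distrib_left)
    finally show ?thesis using suma sumb rn unfolding q_def by auto
  qed
  have S2: "2*q \<le> (\<Sum>k\<in>{..<n}. sw (u k))"
  proof -
    have "(\<Sum>k<n. 2::nat) \<le> (\<Sum>k<n. sw (u k) + a k + b k)"
      unfolding u_def using sw_bound by (intro sum_mono) auto
    also have "\<dots> = (\<Sum>k<n. sw (u k)) + (\<Sum>k<n. a k) + (\<Sum>k<n. b k)"
      by (simp add: sum.distrib)
    finally show ?thesis using suma sumb rn unfolding q_def by auto
  qed
  have q1: "1 \<le> q" using rn unfolding q_def by auto
  obtain \<phi> where \<phi>: "\<forall>k\<in>{..<n}. \<phi> k < q" "\<forall>j<q. T \<le> (\<Sum>k\<in>{k\<in>{..<n}. \<phi> k = j}. \<rho> k)"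
    using BC[OF q1 _ u4 r0 rT S1 S2] by auto
  define A where "A = restrict (\<lambda>x. \<phi> (A0 x)) (X - R)"
  have AE: "A \<in> (X - R) \<rightarrow>\<^sub>E {..<q}" unfolding A_def using \<phi>(1) A0 by auto
  have cls: "T \<le> (\<Sum>x\<in>{x\<in>X - R. A x = j}. w x)" if j: "j < q" for j
  proof -
    let ?S = "{x\<in>X - R. A x = j}"
    let ?T = "{k\<in>{..<n}. \<phi> k = j}"
    have "(\<Sum>x\<in>?S. w x) = (\<Sum>k\<in>?T. \<Sum>x\<in>{x. x \<in> ?S \<and> A0 x = k}. w x)"
      using X A0 unfolding A_def by (intro sum.group[symmetric]) auto
    also have "\<dots> = (\<Sum>k\<in>?T. \<rho> k)"
      unfolding \<rho>_def P_def A_def by (intro sum.cong refl) auto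
    finally show ?thesis using \<phi>(2) j by auto
  qed
  show ?thesis
    using MMS_ge[of "X - R" A q T w] X AE q1 cls unfolding q_def T_def by auto
qed



lemma goods_at_mem: "p \<in> P \<Longrightarrow> 1 \<le> p \<Longrightarrow> p \<le> length L \<Longrightarrow> L!(p-1) \<in> goods_at L P"
  unfolding goods_at_def by blast

lemma goods_at_cases: "x \<in> goods_at L P \<Longrightarrow> \<exists>p\<in>P. 1 \<le> p \<and> p \<le> length L \<and> x = L!(p-1)"
  unfolding goods_at_def by blast

lemma goods_at_sub: "goods_at L P \<subseteq> set L"
  unfolding goods_at_def by auto

lemma sum_sub_le:
  fixes f :: "'a \<Rightarrow> real"
  assumes "finite A" "B \<subseteq> A" "\<forall>x\<in>A. f x \<ge> 0"
  shows "(\<Sum>x\<in>B. f x) \<le> (\<Sum>x\<in>A. f x)"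
  using assms by (intro sum_mono2) auto

definition r4 :: "(nat \<times> nat \<times> nat set) list \<Rightarrow> nat" where
  "r4 tr = length (filter (\<lambda>s. fst s = 4) tr)"

definition G4 :: "(nat \<times> nat \<times> nat set) list \<Rightarrow> nat set" where
  "G4 tr = (\<Union>(k, a, S)\<in>set tr. if k = 4 then S else {})"

lemma run_analysis:
  assumes "reduce_run w \<alpha> N L tr N' L'"
  shows "finite N \<Longrightarrow> sorted_wrt (<) L \<Longrightarrow>
    (\<forall>x\<in>set L. \<forall>y\<in>set L. x \<le> y \<longrightarrow> w i y \<le> w i x) \<Longrightarrow>
    (\<forall>x\<in>set L. w i x \<ge> 0) \<Longrightarrow> i \<in> N' \<Longrightarrow>
    N' \<subseteq> N \<and> card N = card N' + length tr \<and>
    (\<exists>G H. finite G \<and> finite H \<and> card G \<le> r4 tr \<and> card H \<le> r4 tr \<and>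
        (\<forall>g\<in>G. w i g \<le> \<alpha>) \<and> (\<forall>h\<in>H. 3 * w i h \<le> \<alpha>) \<and> G4 tr \<subseteq> G \<union> H)"
  using assms
proof (induction rule: reduce_run.induct)
  case (stop w \<alpha> N L)
  then show ?case by (intro conjI exI[of _ "{}"]) (auto simp: r4_def G4_def)
next
  case (step w \<alpha> N L k i0 S tr N' L')
  let ?L = "filter (\<lambda>g. g \<notin> S) L"
  have IH: "N' \<subseteq> N - {i0} \<and> card (N - {i0}) = card N' + length tr \<and>
    (\<exists>G H. finite G \<and> finite H \<and> card G \<le> r4 tr \<and> card H \<le> r4 tr \<and>
        (\<forall>g\<in>G. w i g \<le> \<alpha>) \<and> (\<forall>h\<in>H. 3 * w i h \<le> \<alpha>) \<and> G4 tr \<subseteq> G \<union> H)"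
  proof (rule step.IH)
    show "finite (N - {i0})" using step.prems(1) by simp
    show "sorted_wrt (<) ?L" using step.prems(2) by (simp add: sorted_wrt_filter)
    show "\<forall>x\<in>set ?L. \<forall>y\<in>set ?L. x \<le> y \<longrightarrow> w i y \<le> w i x" using step.prems(3) by simp
    show "\<forall>x\<in>set ?L. w i x \<ge> 0" using step.prems(4) by simp
    show "i \<in> N'" using step.prems(5) .
  qed
  have i0: "i0 \<in> N" "k \<in> {1..4}" using step.hyps(1) unfolding rule_applicable_def by auto
  have iN: "i \<in> N" using IH step.prems by auto
  have cardN: "card N = card N' + length ((k, i0, S) # tr)"
  proof -
    have "card (N - {i0}) = card N - 1" using i0(1) step.prems(1) by (simp add: card_Diff_singleton)
    moreover have "card N \<ge> 1" using i0(1) step.prems(1) by (metis One_nat_def Suc_leI card_gt_0_iff empty_iff)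
    ultimately show ?thesis using IH by simp
  qed
  obtain G H where GH: "finite G" "finite H" "card G \<le> r4 tr" "card H \<le> r4 tr"
     "\<forall>g\<in>G. w i g \<le> \<alpha>" "\<forall>h\<in>H. 3 * w i h \<le> \<alpha>" "G4 tr \<subseteq> G \<union> H"
    using IH by blast
  show ?case
  proof (cases "k = 4")
    case False
    have "r4 ((k, i0, S) # tr) = r4 tr" "G4 ((k, i0, S) # tr) = G4 tr"
      using False by (auto simp: r4_def G4_def)
    have sub: "N' \<subseteq> N" using IH by auto
    show ?thesis
    proof (intro conjI)
      show "N' \<subseteq> N" by (rule sub)
      show "card N = card N' + length ((k, i0, S) # tr)" by (rule cardN)
      show "\<exists>G H. finite G \<and> finite H \<and> card G \<le> r4 ((k, i0, S) # tr) \<and> card H \<le> r4 ((k, i0, S) # tr) \<and>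
        (\<forall>g\<in>G. w i g \<le> \<alpha>) \<and> (\<forall>h\<in>H. 3 * w i h \<le> \<alpha>) \<and> G4 ((k, i0, S) # tr) \<subseteq> G \<union> H"
        apply (rule exI[of _ G], rule exI[of _ H])
        using GH \<open>r4 ((k, i0, S) # tr) = r4 tr\<close> \<open>G4 ((k, i0, S) # tr) = G4 tr\<close> by simp
    qed
  next
    case True
    define c where "c = card N"
    have c1: "c \<ge> 1" using iN step.prems(1) unfolding c_def
      by (metis One_nat_def Suc_leI card_gt_0_iff empty_iff)
    have S: "S = goods_at L {1, 2*c+1}"
      using step.hyps(3) True unfolding c_def rule_pos_def by simp
    have finL: "finite (set L)" by simp
    have nnL: "\<forall>x\<in>set L. w i x \<ge> 0" using step.prems by auto
    have no1: "\<not> rule_applicable w \<alpha> N L 1 i" using step.hyps(2) True by auto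
    have no2: "\<not> rule_applicable w \<alpha> N L 2 i" using step.hyps(2) True by auto
    have g_ok: "w i (L!0) \<le> \<alpha>" if "L \<noteq> []"
    proof -
      have "L!0 \<in> goods_at L {1}" using goods_at_mem[of 1 "{1}" L] that by (auto simp: Suc_le_eq)
      then have "(\<Sum>x\<in>{L!0}. w i x) \<le> (\<Sum>x\<in>goods_at L {1}. w i x)"
        using goods_at_sub nnL by (intro sum_sub_le[OF finite_subset[OF goods_at_sub finL]]) auto
      moreover have "(\<Sum>x\<in>goods_at L {1}. w i x) < \<alpha>"
        using no1 iN unfolding rule_applicable_def rule_pos_def by auto
      ultimately show ?thesis by simp
    qed
    have h_ok: "3 * w i (L!(2*c)) \<le> \<alpha>" if "2*c+1 \<le> length L"
    proof -
      let ?x = "L!(2*c-2)" and ?y = "L!(2*c-1)" and ?z = "L!(2*c)"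
      have sub: "{?x, ?y, ?z} \<subseteq> goods_at L {2*c-1, 2*c, 2*c+1}"
        using goods_at_mem[of "2*c-1" "{2*c-1, 2*c, 2*c+1}" L]
          goods_at_mem[of "2*c" "{2*c-1, 2*c, 2*c+1}" L]
          goods_at_mem[of "2*c+1" "{2*c-1, 2*c, 2*c+1}" L] that c1
        by (auto simp: numeral_2_eq_2)
      have lt: "?x < ?y" "?y < ?z"
        using sorted_wrt_nth_less[OF step.prems(2), of "2*c-2" "2*c-1"]
          sorted_wrt_nth_less[OF step.prems(2), of "2*c-1" "2*c"] that c1 by auto
      have inL: "?x \<in> set L" "?y \<in> set L" "?z \<in> set L" using that by auto
      have mono: "w i ?z \<le> w i ?x" "w i ?z \<le> w i ?y"
        using step.prems(3) inL lt by auto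
      have "(\<Sum>x\<in>{?x, ?y, ?z}. w i x) = w i ?x + w i ?y + w i ?z" using lt by auto
      moreover have "(\<Sum>x\<in>{?x, ?y, ?z}. w i x) \<le> (\<Sum>x\<in>goods_at L {2*c-1, 2*c, 2*c+1}. w i x)"
        using sub goods_at_sub nnL by (intro sum_sub_le[OF finite_subset[OF goods_at_sub finL]]) auto
      moreover have "(\<Sum>x\<in>goods_at L {2*c-1, 2*c, 2*c+1}. w i x) < \<alpha>"
        using no2 iN unfolding rule_applicable_def rule_pos_def c_def by auto
      ultimately show ?thesis using mono by linarith
    qed
    define G' where "G' = G \<union> (S \<inter> {L!0})"
    define H' where "H' = H \<union> (S - {L!0})"
    have Sg: "x \<in> S \<Longrightarrow> x \<noteq> L!0 \<Longrightarrow> x = L!(2*c) \<and> 2*c+1 \<le> length L" for x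
      using goods_at_cases[of x L "{1, 2*c+1}"] S by auto
    have S0: "L!0 \<in> S \<Longrightarrow> L \<noteq> []"
      using goods_at_cases[of "L!0" L "{1, 2*c+1}"] S by auto
    have G'ok: "\<forall>g\<in>G'. w i g \<le> \<alpha>" using GH(5) g_ok S0 unfolding G'_def by auto
    have H'ok: "\<forall>h\<in>H'. 3 * w i h \<le> \<alpha>" using GH(6) h_ok Sg unfolding H'_def by auto
    have cG: "card G' \<le> r4 ((k, i0, S) # tr)"
    proof -
      have a: "card G' \<le> card G + card (S \<inter> {L!0})" unfolding G'_def by (rule card_Un_le)
      have b: "card (S \<inter> {L!0}) \<le> 1" using card_mono[of "{L!0}" "S \<inter> {L!0}"] by auto
      show ?thesis using a b GH(3) True by (simp add: r4_def)
    qed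
    have cH: "card H' \<le> r4 ((k, i0, S) # tr)"
    proof -
      have a: "card H' \<le> card H + card (S - {L!0})" unfolding H'_def by (rule card_Un_le)
      have s: "S - {L!0} \<subseteq> {L!(2*c)}" using Sg by auto
      have b: "card (S - {L!0}) \<le> 1" using card_mono[OF _ s] by simp
      show ?thesis using a b GH(4) True by (simp add: r4_def)
    qed
    have fS: "finite S" using S finite_subset[OF goods_at_sub finL] by simp
    have "G4 ((k, i0, S) # tr) = S \<union> G4 tr" using True by (auto simp: G4_def)
    then have "G4 ((k, i0, S) # tr) \<subseteq> G' \<union> H'" using GH(7) unfolding G'_def H'_def by auto
    moreover have "finite G'" "finite H'" using GH fS unfolding G'_def H'_def by auto
    ultimately have GH': "finite G' \<and> finite H' \<and> card G' \<le> r4 ((k, i0, S) # tr) \<and> card H' \<le> r4 ((k, i0, S) # tr) \<and>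
        (\<forall>g\<in>G'. w i g \<le> \<alpha>) \<and> (\<forall>h\<in>H'. 3 * w i h \<le> \<alpha>) \<and> G4 ((k, i0, S) # tr) \<subseteq> G' \<union> H'"
      using G'ok H'ok cG cH by simp
    have sub: "N' \<subseteq> N" using IH by auto
    show ?thesis
    proof (intro conjI)
      show "N' \<subseteq> N" by (rule sub)
      show "card N = card N' + length ((k, i0, S) # tr)" by (rule cardN)
      show "\<exists>G H. finite G \<and> finite H \<and> card G \<le> r4 ((k, i0, S) # tr) \<and> card H \<le> r4 ((k, i0, S) # tr) \<and>
        (\<forall>g\<in>G. w i g \<le> \<alpha>) \<and> (\<forall>h\<in>H. 3 * w i h \<le> \<alpha>) \<and> G4 ((k, i0, S) # tr) \<subseteq> G \<union> H"
        apply (rule exI[of _ G'], rule exI[of _ H'])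
        using GH' by simp
    qed
  qed
qed



lemma order_val_bij:
  assumes "finite M"
  shows "\<exists>\<sigma>. bij_betw \<sigma> {1..card M} M \<and> (\<forall>j\<in>{1..card M}. order_val M v i j = v i (\<sigma> j))"
proof -
  define xs where "xs = rev (sorted_list_of_multiset (image_mset (v i) (mset_set M)))"
  obtain ls where ls: "set ls = M" "distinct ls" using finite_distinct_list[OF assms] by blast
  have lls: "length ls = card M" using ls distinct_card by fastforce
  have "mset xs = image_mset (v i) (mset_set M)" unfolding xs_def by simp
  also have "\<dots> = mset (map (v i) ls)" using mset_set_set[OF ls(2)] ls(1) by simp
  finally have pm: "mset xs = mset (map (v i) ls)" .
  have lxs: "length xs = card M" using mset_eq_length[OF pm] lls by simp
  obtain f where f: "bij_betw f {..<length xs} {..<length (map (v i) ls)}"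
     "\<forall>k<length xs. xs ! k = (map (v i) ls) ! (f k)"
    using permutation_Ex_bij[OF pm] by blast
  define \<sigma> where "\<sigma> = (\<lambda>j. ls ! (f (j - 1)))"
  have b1: "bij_betw (\<lambda>j. j - 1) {1..card M} {..<card M}"
    by (rule bij_betw_byWitness[where f' = Suc]) auto
  have b2: "bij_betw f {..<card M} {..<card M}" using f(1) lxs lls by simp
  have b3: "bij_betw ((!) ls) {..<card M} M" using bij_betw_nth[OF ls(2)] lls ls(1) by simp
  have "bij_betw ((!) ls \<circ> f \<circ> (\<lambda>j. j - 1)) {1..card M} M"
    by (rule bij_betw_trans[OF b1 bij_betw_trans[OF b2 b3]])
  then have bs: "bij_betw \<sigma> {1..card M} M" unfolding \<sigma>_def by (simp add: comp_def)
  have "\<forall>j\<in>{1..card M}. order_val M v i j = v i (\<sigma> j)"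
  proof
    fix j assume j: "j \<in> {1..card M}"
    have "j - 1 \<in> {..<card M}" using j by auto
    then have fk: "f (j - 1) < card M" using bij_betw_apply[OF b2] by blast
    have "order_val M v i j = xs ! (j - 1)" using j unfolding order_val_def xs_def by simp
    also have "\<dots> = (map (v i) ls) ! (f (j - 1))" using f(2) j lxs by auto
    also have "\<dots> = v i (\<sigma> j)" unfolding \<sigma>_def using fk lls by simp
    finally show "order_val M v i j = v i (\<sigma> j)" .
  qed
  then show ?thesis using bs by blast
qed

lemma order_val_props:
  assumes "finite M" "\<forall>g\<in>M. v i g \<ge> 0"
  shows "\<forall>j\<in>{1..card M}. order_val M v i j \<ge> 0"
    and "\<forall>x\<in>{1..card M}. \<forall>y\<in>{1..card M}. x \<le> y \<longrightarrow> order_val M v i y \<le> order_val M v i x"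
proof -
  obtain \<sigma> where s: "bij_betw \<sigma> {1..card M} M" "\<forall>j\<in>{1..card M}. order_val M v i j = v i (\<sigma> j)"
    using order_val_bij[OF assms(1)] by blast
  show "\<forall>j\<in>{1..card M}. order_val M v i j \<ge> 0"
    using s assms(2) by (auto dest: bij_betw_apply)
  define xs where "xs = rev (sorted_list_of_multiset (image_mset (v i) (mset_set M)))"
  have lxs: "length xs = card M"
  proof -
    have "length xs = size (mset xs)" by simp
    also have "mset xs = image_mset (v i) (mset_set M)" unfolding xs_def by simp
    finally show ?thesis using assms(1) by simp
  qed
  have so: "sorted (rev xs)" unfolding xs_def by simp
  show "\<forall>x\<in>{1..card M}. \<forall>y\<in>{1..card M}. x \<le> y \<longrightarrow> order_val M v i y \<le> order_val M v i x"
  proof (intro ballI impI)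
    fix x y assume xy: "x \<in> {1..card M}" "y \<in> {1..card M}" "x \<le> y"
    have "xs ! (y - 1) \<le> xs ! (x - 1)"
      using sorted_rev_nth_mono[OF so, of "x - 1" "y - 1"] xy lxs by auto
    then show "order_val M v i y \<le> order_val M v i x"
      using xy unfolding order_val_def xs_def by simp
  qed
qed

lemma order_val_MMS:
  assumes "finite M" "1 \<le> n"
  shows "MMS n (v i) M \<le> MMS n (order_val M v i) {1..card M}"
proof -
  obtain \<sigma> where s: "bij_betw \<sigma> {1..card M} M" "\<forall>j\<in>{1..card M}. order_val M v i j = v i (\<sigma> j)"
    using order_val_bij[OF assms(1)] by blast
  obtain A where A: "A \<in> M \<rightarrow>\<^sub>E {..<n}" "\<forall>j<n. MMS n (v i) M \<le> (\<Sum>g\<in>{g\<in>M. A g = j}. v i g)"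
    using MMS_attained[OF assms] by blast
  define A' where "A' = restrict (\<lambda>j. A (\<sigma> j)) {1..card M}"
  have A'E: "A' \<in> {1..card M} \<rightarrow>\<^sub>E {..<n}" unfolding A'_def using A(1) s(1)
    by (auto dest: bij_betw_apply)
  have eq: "(\<Sum>g\<in>{g\<in>{1..card M}. A' g = j}. order_val M v i g) = (\<Sum>g\<in>{g\<in>M. A g = j}. v i g)" for j
  proof -
    have inj: "inj_on \<sigma> {g\<in>{1..card M}. A' g = j}"
      using s(1) unfolding bij_betw_def by (rule inj_on_subset[OF conjunct1]) auto
    have img: "\<sigma> ` {g\<in>{1..card M}. A' g = j} = {g\<in>M. A g = j}"
    proof
      show "\<sigma> ` {g\<in>{1..card M}. A' g = j} \<subseteq> {g\<in>M. A g = j}"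
        using s(1) unfolding A'_def by (auto dest: bij_betw_apply)
      show "{g\<in>M. A g = j} \<subseteq> \<sigma> ` {g\<in>{1..card M}. A' g = j}"
      proof
        fix g assume g: "g \<in> {g\<in>M. A g = j}"
        have "g \<in> \<sigma> ` {1..card M}" using s(1) g unfolding bij_betw_def by auto
        then obtain x where x: "x \<in> {1..card M}" "\<sigma> x = g" by blast
        then show "g \<in> \<sigma> ` {g\<in>{1..card M}. A' g = j}" using g unfolding A'_def by auto
      qed
    qed
    have "(\<Sum>g\<in>{g\<in>{1..card M}. A' g = j}. order_val M v i g) = (\<Sum>g\<in>{g\<in>{1..card M}. A' g = j}. v i (\<sigma> g))"
      using s(2) by (intro sum.cong) auto
    also have "\<dots> = (\<Sum>g\<in>\<sigma> ` {g\<in>{1..card M}. A' g = j}. v i g)"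
      using inj by (simp add: sum.reindex)
    finally show ?thesis unfolding img .
  qed
  show ?thesis
    using MMS_ge[OF _ A'E assms(2), of "MMS n (v i) M" "order_val M v i"] A(2) eq by auto
qed


lemma run_sub: "reduce_run w \<alpha> N L tr N' L' \<Longrightarrow> N' \<subseteq> N"
  by (induction rule: reduce_run.induct) auto

theorem lemma18:
  fixes n :: nat and M :: "'g set" and v :: "nat \<Rightarrow> 'g \<Rightarrow> real" and \<epsilon> :: real
    and tr :: "(nat \<times> nat \<times> nat set) list" and N' :: "nat set" and L' :: "nat list"
  assumes "finite M"
    and "\<forall>i\<in>{1..n}. \<forall>g\<in>M. v i g \<ge> 0"
    and "\<forall>i\<in>{1..n}. MMS n (v i) M > 0"
    and "\<epsilon> \<ge> 0"
    and "reduce_run (normalize_val n (card M) (order_val M v)) (3/4 + \<epsilon>)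
           {1..n} [1..<card M + 1] tr N' L'"
  shows "\<forall>i\<in>N'.
           MMS (n - length (filter (\<lambda>s. fst s = 4) tr))
               (normalize_val n (card M) (order_val M v) i)
               ({1..card M} - (\<Union>(k, a, S)\<in>set tr. if k = 4 then S else {}))
           \<ge> 1 - 4 * \<epsilon>"
proof
  fix i assume iN': "i \<in> N'"
  define m where "m = card M"
  define f where "f = order_val M v i"
  define c where "c = MMS n f {1..m}"
  define W where "W = normalize_val n m (order_val M v)"
  have iN: "i \<in> {1..n}" using run_sub[OF assms(5)] iN' by auto
  have n1: "1 \<le> n" using iN by auto
  have c0: "c > 0"
    using order_val_MMS[OF assms(1) n1, of v i] assms(3) iN unfolding c_def f_def m_def by fastforce
  have Wf: "\<And>x. W i x = f x / c" unfolding W_def normalize_val_def f_def c_def m_def by simp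
  have fprops: "\<forall>j\<in>{1..m}. f j \<ge> 0" "\<forall>x\<in>{1..m}. \<forall>y\<in>{1..m}. x \<le> y \<longrightarrow> f y \<le> f x"
    using order_val_props[OF assms(1), of v i] assms(2) iN unfolding f_def m_def by auto
  have setL: "set [1..<m + 1] = {1..m}" by auto
  have W0: "\<forall>x\<in>set [1..<m + 1]. W i x \<ge> 0" unfolding setL Wf using fprops(1) c0 by auto
  have Wmono: "\<forall>x\<in>set [1..<m + 1]. \<forall>y\<in>set [1..<m + 1]. x \<le> y \<longrightarrow> W i y \<le> W i x"
    unfolding setL Wf using fprops(2) c0 by (auto intro: divide_right_mono)
  have sortL: "sorted_wrt (<) [1..<m + 1]" by (rule sorted_wrt_upt)
  have run: "reduce_run W (3/4 + \<epsilon>) {1..n} [1..<m + 1] tr N' L'"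
    using assms(5) unfolding W_def m_def .
  have RA: "N' \<subseteq> {1..n} \<and> card {1..n} = card N' + length tr \<and>
    (\<exists>G H. finite G \<and> finite H \<and> card G \<le> r4 tr \<and> card H \<le> r4 tr \<and>
        (\<forall>g\<in>G. W i g \<le> 3/4 + \<epsilon>) \<and> (\<forall>h\<in>H. 3 * W i h \<le> 3/4 + \<epsilon>) \<and> G4 tr \<subseteq> G \<union> H)"
    by (rule run_analysis[OF run _ sortL Wmono W0 iN']) simp
  then obtain G H where GH: "finite G" "finite H" "card G \<le> r4 tr" "card H \<le> r4 tr"
        "\<forall>g\<in>G. W i g \<le> 3/4 + \<epsilon>" "\<forall>h\<in>H. 3 * W i h \<le> 3/4 + \<epsilon>" "G4 tr \<subseteq> G \<union> H"
    by blast
  have "card N' \<ge> 1"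
    using iN' RA finite_subset[of N' "{1..n}"] by (metis One_nat_def Suc_leI card_gt_0_iff empty_iff finite_atLeastAtMost)
  then have "length tr < n" using RA by simp
  moreover have "r4 tr \<le> length tr" unfolding r4_def by simp
  ultimately have rn: "r4 tr < n" by simp
  obtain A0 where A0: "A0 \<in> {1..m} \<rightarrow>\<^sub>E {..<n}" "\<forall>j<n. c \<le> (\<Sum>g\<in>{g\<in>{1..m}. A0 g = j}. f g)"
    using MMS_attained[of "{1..m}" n f] n1 unfolding c_def by auto
  have A0n: "\<forall>x\<in>{1..m}. A0 x < n" using A0(1) by auto
  have P1: "\<forall>k<n. (\<Sum>x\<in>{x\<in>{1..m}. A0 x = k}. W i x) \<ge> 1"
  proof (intro allI impI)
    fix k assume k: "k < n"
    have "(\<Sum>x\<in>{x\<in>{1..m}. A0 x = k}. W i x) = (\<Sum>x\<in>{x\<in>{1..m}. A0 x = k}. f x) / c"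
      unfolding Wf by (simp add: sum_divide_distrib)
    then show "(\<Sum>x\<in>{x\<in>{1..m}. A0 x = k}. W i x) \<ge> 1" using A0(2) k c0 by simp
  qed
  have W0': "\<forall>x\<in>{1..m}. W i x \<ge> 0" using W0 unfolding setL .
  have "MMS (n - r4 tr) (W i) ({1..m} - G4 tr) \<ge> 1 - 4*\<epsilon>"
    using comb[OF _ A0n P1 W0' GH(1,3,5) GH(2,4,6) assms(4) GH(7) rn] by simp
  then show "MMS (n - length (filter (\<lambda>s. fst s = 4) tr))
               (normalize_val n (card M) (order_val M v) i)
               ({1..card M} - (\<Union>(k, a, S)\<in>set tr. if k = 4 then S else {}))
           \<ge> 1 - 4 * \<epsilon>"
    unfolding W_def m_def r4_def G4_def by simp
qed

end
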